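(* Let $f:\{0,1\}^n\to\{0,1\}$ be symmetric, $c\in\mathbb{R}^n_{\ge0}$ any cost vector, $\varepsilon\in(0,0.5]$ and $\beta>0$. Then the online algorithm Warmup-IPRR$(f,\varepsilon)$ with unit investment $\beta$ is an $\varepsilon$-error algorithm with expected cost at most \[ \beta n+\mathrm{opt}^{\mathrm{avg}}_0(f,c)\cdot O\!\left(\log\frac1\varepsilon\right), \] where $O(\cdot)$ hides an absolute constant.
   Context: $f$ is symmetric if $f(x)=f(y)$ whenever $\sum_ix_i=\sum_iy_i$. Online priced query model: $f$ is given; input $x$ and costs $c$ unknown; investments $\theta$ start at $0$, each step one $\theta_i$ increases by $\beta$; $x_i$ is revealed once $\theta_i\ge c_i$; cost is $\|\theta\|_1$ at halting; expected cost is over uniform $x\in\{0,1\}^n$. An algorithm is $\varepsilon$-error if $\Pr_x[\text{output}\ne f(x)]\le\varepsilon$. $\mathrm{opt}^{\mathrm{avg}}_0(f,c)$ is the infimum of expected cost over all zero-error algorithms (offline ones know $c$ and pay $c_i$ per revealed $x_i$). $\mathrm{Inf}_i[g]=\Pr_x[g(x)\ne g(x^{\oplus i})]$; for a restriction $\pi$, $f_\pi$ is the restricted function; $\mathrm{bias}(g)=\min\{\Pr_x[g\ne0],\Pr_x[g\ne1]\}$. Warmup-IPRR$(f,\varepsilon)$: start with $\theta=0,\pi=\emptyset$; while $\mathrm{bias}(f_\pi)>\varepsilon$: pick $i^*\in\arg\max_i\mathrm{Inf}_i[f_\pi]/\theta_i$, increase $\theta_{i^*}$ by $\beta$, and if $x_{i^*}$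 is revealed as $b$ add $x_{i^*}\mapsto b$ to $\pi$; output $\mathbf{1}\{\mathbb{E}_x[f_\pi(x)]\ge1/2\}$. *)

theory Defs
  imports Complex_Main "HOL-Library.Extended_Real"
begin

text \<open>Inputs x in {0,1}^n are functions nat => bool that are False outside {0..<n}.\<close>
definition cube :: "nat \<Rightarrow> (nat \<Rightarrow> bool) set" where
  "cube n = {x. \<forall>i\<ge>n. \<not> x i}"

definition prob :: "nat \<Rightarrow> ((nat \<Rightarrow> bool) \<Rightarrow> bool) \<Rightarrow> real" where
  "prob n P = real (card {x \<in> cube n. P x}) / 2 ^ n"

definition expect :: "nat \<Rightarrow> ((nat \<Rightarrow> bool) \<Rightarrow> real) \<Rightarrow> real" where
  "expect n g = (\<Sum>x\<in>cube n. g x) / 2 ^ n"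

definition symmetric_fun :: "nat \<Rightarrow> ((nat \<Rightarrow> bool) \<Rightarrow> bool) \<Rightarrow> bool" where
  "symmetric_fun n f \<longleftrightarrow> (\<forall>x\<in>cube n. \<forall>y\<in>cube n.
      card {i. i < n \<and> x i} = card {i. i < n \<and> y i} \<longrightarrow> f x = f y)"

definition restrict_fun ::
  "((nat \<Rightarrow> bool) \<Rightarrow> bool) \<Rightarrow> (nat \<rightharpoonup> bool) \<Rightarrow> (nat \<Rightarrow> bool) \<Rightarrow> bool" where
  "restrict_fun f \<pi> x = f (\<lambda>i. case \<pi> i of Some b \<Rightarrow> b | None \<Rightarrow> x i)"

definition flip :: "nat \<Rightarrow> (nat \<Rightarrow> bool) \<Rightarrow> (nat \<Rightarrow> bool)" where
  "flip i x = x(i := \<not> x i)"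

definition influence :: "nat \<Rightarrow> ((nat \<Rightarrow> bool) \<Rightarrow> bool) \<Rightarrow> nat \<Rightarrow> real" where
  "influence n g i = prob n (\<lambda>x. g x \<noteq> g (flip i x))"

definition bias :: "nat \<Rightarrow> ((nat \<Rightarrow> bool) \<Rightarrow> bool) \<Rightarrow> real" where
  "bias n g = min (prob n (\<lambda>x. g x \<noteq> False)) (prob n (\<lambda>x. g x \<noteq> True))"

text \<open>Score Inf_i[f_pi] / theta_i, with the convention a/0 = +infinity for a > 0 and 0/0 = 0.\<close>
definition iprr_score ::
  "nat \<Rightarrow> ((nat \<Rightarrow> bool) \<Rightarrow> bool) \<Rightarrow> (nat \<Rightarrow> real) \<Rightarrow> (nat \<rightharpoonup> bool) \<Rightarrow> nat \<Rightarrow> ereal" where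
  "iprr_score n f \<theta> \<pi> i =
     (let a = influence n (restrict_fun f \<pi>) i in
      if \<theta> i = 0 then (if a > 0 then \<infinity> else 0) else ereal (a / \<theta> i))"

text \<open>A selection rule (tie-breaking) is any function of the algorithm's state (theta, pi)
  returning an index in argmax_i Inf_i[f_pi]/theta_i whenever the loop condition holds.\<close>
definition valid_selection ::
  "nat \<Rightarrow> ((nat \<Rightarrow> bool) \<Rightarrow> bool) \<Rightarrow> real \<Rightarrow> ((nat \<Rightarrow> real) \<Rightarrow> (nat \<rightharpoonup> bool) \<Rightarrow> nat) \<Rightarrow> bool" where
  "valid_selection n f \<epsilon> sel \<longleftrightarrow>
     (\<forall>\<theta> \<pi>. bias n (restrict_fun f \<pi>) > \<epsilon> \<longrightarrow>
        sel \<theta> \<pi> < n \<and> (\<forall>j<n. iprr_score n f \<theta> \<pi> j \<le> iprr_score n f \<theta> \<pi> (sel \<theta> \<pi>)))"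

definition iprr_step ::
  "(nat \<Rightarrow> real) \<Rightarrow> real \<Rightarrow> ((nat \<Rightarrow> real) \<Rightarrow> (nat \<rightharpoonup> bool) \<Rightarrow> nat) \<Rightarrow> (nat \<Rightarrow> bool) \<Rightarrow>
   (nat \<Rightarrow> real) \<times> (nat \<rightharpoonup> bool) \<Rightarrow> (nat \<Rightarrow> real) \<times> (nat \<rightharpoonup> bool)" where
  "iprr_step c \<beta> sel x s =
     (let \<theta> = fst s; \<pi> = snd s; i = sel \<theta> \<pi>; \<theta>' = \<theta>(i := \<theta> i + \<beta>) in
      (\<theta>', if c i \<le> \<theta>' i then \<pi>(i \<mapsto> x i) else \<pi>))"

definition iprr_state ::
  "(nat \<Rightarrow> real) \<Rightarrow> real \<Rightarrow> ((nat \<Rightarrow> real) \<Rightarrow> (nat \<rightharpoonup> bool) \<Rightarrow> nat) \<Rightarrow> (nat \<Rightarrow> bool) \<Rightarrow>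
   nat \<Rightarrow> (nat \<Rightarrow> real) \<times> (nat \<rightharpoonup> bool)" where
  "iprr_state c \<beta> sel x k = (iprr_step c \<beta> sel x ^^ k) (\<lambda>_. 0, Map.empty)"

definition iprr_stop where
  "iprr_stop n f \<epsilon> c \<beta> sel x k \<longleftrightarrow> bias n (restrict_fun f (snd (iprr_state c \<beta> sel x k))) \<le> \<epsilon>"

definition iprr_halts where
  "iprr_halts n f \<epsilon> c \<beta> sel x \<longleftrightarrow> (\<exists>k. iprr_stop n f \<epsilon> c \<beta> sel x k)"

definition iprr_time where
  "iprr_time n f \<epsilon> c \<beta> sel x = (LEAST k. iprr_stop n f \<epsilon> c \<beta> sel x k)"

definition iprr_final where
  "iprr_final n f \<epsilon> c \<beta> sel x = iprr_state c \<beta> sel x (iprr_time n f \<epsilon> c \<beta> sel x)"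

definition iprr_output where
  "iprr_output n f \<epsilon> c \<beta> sel x \<longleftrightarrow>
     expect n (\<lambda>y. if restrict_fun f (snd (iprr_final n f \<epsilon> c \<beta> sel x)) y then 1 else 0) \<ge> 1/2"

definition iprr_cost where
  "iprr_cost n f \<epsilon> c \<beta> sel x = (\<Sum>i<n. fst (iprr_final n f \<epsilon> c \<beta> sel x) i)"

datatype dtree = Leaf bool | Query nat dtree dtree  \<comment> \<open>Query i t0 t1: go to t1 iff x i\<close>

fun dt_eval :: "dtree \<Rightarrow> (nat \<Rightarrow> bool) \<Rightarrow> bool" where
  "dt_eval (Leaf b) x = b"
| "dt_eval (Query i t0 t1) x = (if x i then dt_eval t1 x else dt_eval t0 x)"

fun dt_queried :: "dtree \<Rightarrow> (nat \<Rightarrow> bool) \<Rightarrow> nat set" where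
  "dt_queried (Leaf b) x = {}"
| "dt_queried (Query i t0 t1) x = insert i (if x i then dt_queried t1 x else dt_queried t0 x)"

fun dt_vars :: "dtree \<Rightarrow> nat set" where
  "dt_vars (Leaf b) = {}"
| "dt_vars (Query i t0 t1) = insert i (dt_vars t0 \<union> dt_vars t1)"

definition opt_avg0 :: "nat \<Rightarrow> ((nat \<Rightarrow> bool) \<Rightarrow> bool) \<Rightarrow> (nat \<Rightarrow> real) \<Rightarrow> real" where
  "opt_avg0 n f c = Inf {expect n (\<lambda>x. \<Sum>i\<in>dt_queried t x. c i) | t.
       dt_vars t \<subseteq> {..<n} \<and> (\<forall>x\<in>cube n. dt_eval t x = f x)}"

end

theory Submission
  imports Defs
begin

section \<open>Cube basics\<close>

lemma cube_iff: "x \<in> cube n \<longleftrightarrow> (\<forall>i. x i \<longrightarrow> i < n)"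
  unfolding cube_def using not_le by blast

lemma finite_cube: "finite (cube n)"
proof -
  have "inj_on (\<lambda>x. {i. x i}) (cube n)"
    by (auto simp: inj_on_def fun_eq_iff)
  moreover have "(\<lambda>x. {i. x i}) ` cube n \<subseteq> Pow {..<n}"
    by (auto simp: cube_iff)
  ultimately show ?thesis
    by (meson finite_Pow_iff finite_lessThan finite_subset finite_imageD)
qed

lemma card_cube: "card (cube n) = 2^n"
proof -
  have "bij_betw (\<lambda>x. {i. x i}) (cube n) (Pow {..<n})"
  proof (rule bij_betw_imageI)
    show "inj_on (\<lambda>x. {i. x i}) (cube n)" by (auto simp: inj_on_def fun_eq_iff)
    show "(\<lambda>x. {i. x i}) ` cube n = Pow {..<n}"
    proof
      show "(\<lambda>x. {i. x i}) ` cube n \<subseteq> Pow {..<n}" by (auto simp: cube_iff)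
      show "Pow {..<n} \<subseteq> (\<lambda>x. {i. x i}) ` cube n"
      proof
        fix S assume "S \<in> Pow {..<n}"
        then have "(\<lambda>i. i \<in> S) \<in> cube n" by (auto simp: cube_iff)
        then show "S \<in> (\<lambda>x. {i. x i}) ` cube n" by (intro image_eqI[of _ _ "\<lambda>i. i \<in> S"]) auto
      qed
    qed
  qed
  then have "card (cube n) = card (Pow {..<n::nat})" by (rule bij_betw_same_card)
  then show ?thesis by (simp add: card_Pow)
qed

lemma false_in_cube: "(\<lambda>_. False) \<in> cube n" by (simp add: cube_def)

lemma flip_cube: "x \<in> cube n \<Longrightarrow> i < n \<Longrightarrow> flip i x \<in> cube n"
  by (auto simp: cube_iff flip_def)

lemma prob_nonneg: "0 \<le> prob n P" by (simp add: prob_def)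

lemma prob_le1: "prob n P \<le> 1"
proof -
  have "card {x \<in> cube n. P x} \<le> card (cube n)" by (rule card_mono[OF finite_cube]) auto
  then show ?thesis by (simp add: prob_def card_cube)
qed

lemma prob_compl: "prob n P + prob n (\<lambda>x. \<not> P x) = 1"
proof -
  have "card {x \<in> cube n. P x} + card {x \<in> cube n. \<not> P x} = card (cube n)"
  proof -
    have u: "{x \<in> cube n. P x} \<union> {x \<in> cube n. \<not> P x} = cube n" by auto
    have "card ({x \<in> cube n. P x} \<union> {x \<in> cube n. \<not> P x}) = card {x \<in> cube n. P x} + card {x \<in> cube n. \<not> P x}"
      by (rule card_Un_disjoint) (auto simp: finite_cube)
    then show ?thesis using u by simp
  qed
  then have "real (card {x \<in> cube n. P x}) + real (card {x \<in> cube n. \<not> P x}) = real (card (cube n))"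
    by (metis of_nat_add)
  also have "\<dots> = 2^n" by (simp add: card_cube)
  finally have "real (card {x \<in> cube n. P x}) + real (card {x \<in> cube n. \<not> P x}) = 2^n" .
  then show ?thesis by (simp add: prob_def add_divide_distrib[symmetric])
qed

lemma finite_cube_sub[simp]: "finite {x \<in> cube n. P x}"
  by (simp add: finite_cube)

lemma prob_mono:
  assumes "\<And>x. x \<in> cube n \<Longrightarrow> P x \<Longrightarrow> Q x"
  shows "prob n P \<le> prob n Q"
proof -
  have "{x \<in> cube n. P x} \<subseteq> {x \<in> cube n. Q x}" using assms by auto
  then have "card {x \<in> cube n. P x} \<le> card {x \<in> cube n. Q x}"
    by (intro card_mono) simp_all
  then show ?thesis unfolding prob_def by (intro divide_right_mono) simp_all
qed

lemma prob_zero: "(\<And>x. x \<in> cube n \<Longrightarrow> \<not> P x) \<Longrightarrow> prob n P = 0"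
proof -
  assume "\<And>x. x \<in> cube n \<Longrightarrow> \<not> P x"
  then have e: "{x \<in> cube n. P x} = {}" by auto
  show ?thesis unfolding prob_def e by simp
qed

lemma bias_nonneg: "0 \<le> bias n g" by (simp add: bias_def prob_nonneg)

lemma bias_le_prob: "bias n g \<le> prob n (\<lambda>x. g x \<noteq> v)"
  by (cases v) (auto simp: bias_def)

lemma bias_const:
  assumes "\<And>y. y \<in> cube n \<Longrightarrow> g y = v"
  shows "bias n g = 0"
proof -
  have "bias n g \<le> prob n (\<lambda>x. g x \<noteq> v)" by (rule bias_le_prob)
  also have "\<dots> = 0" using assms by (intro prob_zero) auto
  finally show ?thesis using bias_nonneg[of n g] by linarith
qed

definition mrg :: "(nat \<rightharpoonup> bool) \<Rightarrow> (nat \<Rightarrow> bool) \<Rightarrow> nat \<Rightarrow> bool" where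
  "mrg \<pi> z = (\<lambda>i. case \<pi> i of Some b \<Rightarrow> b | None \<Rightarrow> z i)"

lemma restrict_mrg: "restrict_fun f \<pi> z = f (mrg \<pi> z)"
  by (simp add: restrict_fun_def mrg_def)

lemma mrg_cube:
  assumes "z \<in> cube n" "\<forall>k. \<pi> k \<noteq> None \<longrightarrow> k < n"
  shows "mrg \<pi> z \<in> cube n"
  using assms by (auto simp: cube_iff mrg_def split: option.splits)

section \<open>Influences\<close>

definition sw :: "nat \<Rightarrow> nat \<Rightarrow> nat \<Rightarrow> nat" where
  "sw i j k = (if k = i then j else if k = j then i else k)"

lemma sw_sw[simp]: "sw i j (sw i j k) = k" by (simp add: sw_def)

lemma sw_lt: "i < n \<Longrightarrow> j < n \<Longrightarrow> sw i j k < n \<longleftrightarrow> k < n"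
  by (auto simp: sw_def)

lemma wt_sw:
  assumes "i < n" "j < n"
  shows "card {k. k < n \<and> z (sw i j k)} = card {k. k < n \<and> z k}"
proof -
  have "{k. k < n \<and> z (sw i j k)} = sw i j ` {k. k < n \<and> z k}"
  proof
    show "{k. k < n \<and> z (sw i j k)} \<subseteq> sw i j ` {k. k < n \<and> z k}"
    proof
      fix k assume "k \<in> {k. k < n \<and> z (sw i j k)}"
      then show "k \<in> sw i j ` {k. k < n \<and> z k}"
        using assms by (intro image_eqI[of _ _ "sw i j k"]) (auto simp: sw_lt)
    qed
    show "sw i j ` {k. k < n \<and> z k} \<subseteq> {k. k < n \<and> z (sw i j k)}"
      using assms by (auto simp: sw_lt)
  qed
  moreover have "inj (sw i j)" by (metis injI sw_sw)
  ultimately show ?thesis by (simp add: card_image inj_on_subset)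
qed

lemma sym_sw:
  assumes sym: "symmetric_fun n f" and "i < n" "j < n" "z \<in> cube n"
  shows "f (\<lambda>k. z (sw i j k)) = f z"
proof -
  have c: "(\<lambda>k. z (sw i j k)) \<in> cube n" using assms by (auto simp: cube_iff sw_lt)
  have s: "\<forall>x\<in>cube n. \<forall>y\<in>cube n. card {i. i < n \<and> x i} = card {i. i < n \<and> y i} \<longrightarrow> f x = f y"
    using sym unfolding symmetric_fun_def .
  show ?thesis by (rule s[rule_format, OF c assms(4) wt_sw[OF assms(2,3)]])
qed

lemma infl_card_le:
  assumes sym: "symmetric_fun n f" and dom: "\<forall>k. \<pi> k \<noteq> None \<longrightarrow> k < n"
    and ij: "i < n" "j < n" "\<pi> i = None" "\<pi> j = None"
  shows "card {y \<in> cube n. restrict_fun f \<pi> y \<noteq> restrict_fun f \<pi> (flip j y)}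
       \<le> card {y \<in> cube n. restrict_fun f \<pi> y \<noteq> restrict_fun f \<pi> (flip i y)}"
proof -
  define \<sigma> where "\<sigma> y = (\<lambda>k. y (sw i j k))" for y :: "nat \<Rightarrow> bool"
  define g where "g = restrict_fun f \<pi>"
  have sc: "\<sigma> y \<in> cube n" if "y \<in> cube n" for y
    using that ij by (auto simp: cube_iff sw_lt \<sigma>_def)
  have mrgs: "mrg \<pi> (\<sigma> y) = \<sigma> (mrg \<pi> y)" for y
  proof (rule ext)
    fix k show "mrg \<pi> (\<sigma> y) k = \<sigma> (mrg \<pi> y) k"
      using ij by (cases "k = i"; cases "k = j") (simp_all add: mrg_def \<sigma>_def sw_def split: option.splits)
  qed
  have gs: "g (\<sigma> y) = g y" if "y \<in> cube n" for y
  proof -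
    have "g (\<sigma> y) = f (\<sigma> (mrg \<pi> y))" by (simp add: g_def restrict_mrg mrgs)
    also have "\<dots> = f (mrg \<pi> y)" unfolding \<sigma>_def
      by (rule sym_sw[OF sym ij(1,2)]) (rule mrg_cube[OF that dom])
    finally show ?thesis by (simp add: g_def restrict_mrg)
  qed
  have fl: "flip i (\<sigma> y) = \<sigma> (flip j y)" for y
  proof (rule ext)
    fix k show "flip i (\<sigma> y) k = \<sigma> (flip j y) k"
      by (cases "k = i"; cases "k = j") (simp_all add: flip_def \<sigma>_def sw_def)
  qed
  have inj: "inj_on \<sigma> {y \<in> cube n. g y \<noteq> g (flip j y)}"
  proof (rule inj_onI)
    fix a b assume "\<sigma> a = \<sigma> b"
    then have "\<sigma> (\<sigma> a) = \<sigma> (\<sigma> b)" by simp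
    then show "a = b" by (simp add: \<sigma>_def)
  qed
  have sub: "\<sigma> ` {y \<in> cube n. g y \<noteq> g (flip j y)} \<subseteq> {y \<in> cube n. g y \<noteq> g (flip i y)}"
  proof
    fix w assume "w \<in> \<sigma> ` {y \<in> cube n. g y \<noteq> g (flip j y)}"
    then obtain y where y: "y \<in> cube n" "g y \<noteq> g (flip j y)" "w = \<sigma> y" by auto
    have "g (flip i w) = g (\<sigma> (flip j y))" using y(3) fl by simp
    also have "\<dots> = g (flip j y)" by (rule gs[OF flip_cube[OF y(1) ij(2)]])
    finally have "g (flip i w) = g (flip j y)" .
    moreover have "g w = g y" using y(3) gs[OF y(1)] by simp
    moreover have "w \<in> cube n" using y(3) sc[OF y(1)] by simp
    ultimately show "w \<in> {y \<in> cube n. g y \<noteq> g (flip i y)}" using y(2) by simp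
  qed
  have "card {y \<in> cube n. g y \<noteq> g (flip j y)} \<le> card {y \<in> cube n. g y \<noteq> g (flip i y)}"
    by (rule card_inj_on_le[OF inj sub]) (simp add: finite_cube)
  then show ?thesis by (simp add: g_def)
qed

lemma infl_eq:
  assumes sym: "symmetric_fun n f" and dom: "\<forall>k. \<pi> k \<noteq> None \<longrightarrow> k < n"
    and ij: "i < n" "j < n" "\<pi> i = None" "\<pi> j = None"
  shows "influence n (restrict_fun f \<pi>) i = influence n (restrict_fun f \<pi>) j"
proof -
  have "card {y \<in> cube n. restrict_fun f \<pi> y \<noteq> restrict_fun f \<pi> (flip i y)}
      = card {y \<in> cube n. restrict_fun f \<pi> y \<noteq> restrict_fun f \<pi> (flip j y)}"
    by (rule le_antisym[OF infl_card_le[OF sym dom ij(2,1,4,3)] infl_card_le[OF sym dom ij]])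
  then show ?thesis unfolding influence_def prob_def by simp
qed

lemma infl_fixed:
  assumes "\<pi> i \<noteq> None"
  shows "influence n (restrict_fun f \<pi>) i = 0"
proof -
  have "mrg \<pi> (flip i y) = mrg \<pi> y" for y
    using assms by (auto simp: mrg_def flip_def fun_eq_iff split: option.splits)
  then show ?thesis unfolding influence_def restrict_mrg by (intro prob_zero) auto
qed

lemma infl_nonneg: "0 \<le> influence n g i" by (simp add: influence_def prob_nonneg)

lemma const_of_zero_infl:
  assumes "\<And>j y. j < n \<Longrightarrow> y \<in> cube n \<Longrightarrow> g y = g (flip j y)"
  shows "y \<in> cube n \<Longrightarrow> g y = g (\<lambda>_. False)"
proof -
  have "\<forall>y\<in>cube n. (\<forall>i\<ge>k. \<not> y i) \<longrightarrow> g y = g (\<lambda>_. False)" for k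
  proof (induction k)
    case 0
    then show ?case by (auto intro: arg_cong[where f=g])
  next
    case (Suc k)
    show ?case
    proof (intro ballI impI)
      fix y assume y: "y \<in> cube n" "\<forall>i\<ge>Suc k. \<not> y i"
      show "g y = g (\<lambda>_. False)"
      proof (cases "y k")
        case False
        have "\<forall>i\<ge>k. \<not> y i"
        proof (intro allI impI)
          fix i assume "k \<le> i"
          then show "\<not> y i" using False y(2) by (cases "i = k") auto
        qed
        then show ?thesis using Suc y(1) by blast
      next
        case True
        then have kn: "k < n" using y(1) by (simp add: cube_iff)
        have "\<forall>i\<ge>k. \<not> flip k y i"
        proof (intro allI impI)
          fix i assume "k \<le> i"
          then show "\<not> flip k y i" using True y(2) by (cases "i = k") (auto simp: flip_def)
        qed
        then have "g (flip k y) = g (\<lambda>_. False)" using Suc flip_cube[OF y(1) kn] by blast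
        then show ?thesis using assms[OF kn y(1)] by simp
      qed
    qed
  qed
  then show "y \<in> cube n \<Longrightarrow> g y = g (\<lambda>_. False)" unfolding cube_def by blast
qed

lemma infl_zero_D:
  assumes "influence n g j = 0" "y \<in> cube n"
  shows "g y = g (flip j y)"
proof -
  have "card {y \<in> cube n. g y \<noteq> g (flip j y)} = 0" using assms(1) by (simp add: influence_def prob_def)
  then have "{y \<in> cube n. g y \<noteq> g (flip j y)} = {}" using finite_cube[of n] by (simp add: card_eq_0_iff)
  then show ?thesis using assms(2) by blast
qed

lemma bias_pos_free:
  assumes dom: "\<forall>k. \<pi> k \<noteq> None \<longrightarrow> k < n" and b: "0 < bias n (restrict_fun f \<pi>)"
  shows "\<exists>j<n. \<pi> j = None \<and> 0 < influence n (restrict_fun f \<pi>) j"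
proof (rule ccontr)
  assume neg: "\<not> ?thesis"
  have z: "influence n (restrict_fun f \<pi>) j = 0" if "j < n" for j
  proof (cases "\<pi> j")
    case None
    then have "\<not> 0 < influence n (restrict_fun f \<pi>) j" using neg that by blast
    then show ?thesis using infl_nonneg[of n "restrict_fun f \<pi>" j] by linarith
  next
    case (Some b)
    then show ?thesis using infl_fixed[of \<pi> j n f] by simp
  qed
  have c: "restrict_fun f \<pi> y = restrict_fun f \<pi> (\<lambda>_. False)" if "y \<in> cube n" for y
  proof (rule const_of_zero_infl[OF _ that])
    fix j y assume "j < n" "y \<in> cube n"
    then show "restrict_fun f \<pi> y = restrict_fun f \<pi> (flip j y)" by (intro infl_zero_D[OF z])
  qed
  have "bias n (restrict_fun f \<pi>) = 0"
    by (rule bias_const[where v="restrict_fun f \<pi> (\<lambda>_. False)"]) (rule c)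
  then show False using b by simp
qed



lemma sel_props:
  assumes sym: "symmetric_fun n f" and vs: "valid_selection n f eps sel" and eps0: "0 < eps"
    and dom: "\<forall>k. \<pi> k \<noteq> None \<longrightarrow> k < n" and nn: "\<forall>i. 0 \<le> \<theta> i"
    and b: "eps < bias n (restrict_fun f \<pi>)"
  shows "sel \<theta> \<pi> < n \<and> \<pi> (sel \<theta> \<pi>) = None \<and> (\<forall>j<n. \<pi> j = None \<longrightarrow> \<theta> (sel \<theta> \<pi>) \<le> \<theta> j)"
proof -
  define s where "s = sel \<theta> \<pi>"
  define I where "I = influence n (restrict_fun f \<pi>)"
  have sc: "iprr_score n f \<theta> \<pi> i = (if \<theta> i = 0 then (if I i > 0 then \<infinity> else 0) else ereal (I i / \<theta> i))" for i
    by (simp add: iprr_score_def I_def Let_def)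
  have sn: "s < n" and smax: "\<forall>j<n. iprr_score n f \<theta> \<pi> j \<le> iprr_score n f \<theta> \<pi> s"
    using vs b unfolding valid_selection_def s_def by blast+
  obtain j0 where j0: "j0 < n" "\<pi> j0 = None" "0 < I j0"
    using bias_pos_free[OF dom] b eps0 unfolding I_def by force
  have Ieq: "I j = I j0" if "j < n" "\<pi> j = None" for j
    unfolding I_def by (rule infl_eq[OF sym dom that(1) j0(1) that(2) j0(2)])
  have pos0: "0 < iprr_score n f \<theta> \<pi> j0"
  proof (cases "\<theta> j0 = 0")
    case True then show ?thesis using j0 sc[of j0] by simp
  next
    case False then have "0 < \<theta> j0" using nn by (simp add: less_le)
    then show ?thesis using j0 sc[of j0] False by simp
  qed
  have free: "\<pi> s = None"
  proof (rule ccontr)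
    assume "\<pi> s \<noteq> None"
    then have "I s = 0" unfolding I_def by (rule infl_fixed)
    then have "iprr_score n f \<theta> \<pi> s = 0" using sc[of s] by simp
    then show False using pos0 smax j0(1) by (metis not_le)
  qed
  have mn: "\<theta> s \<le> \<theta> j" if "j < n" "\<pi> j = None" for j
  proof (cases "\<theta> s = 0")
    case True then show ?thesis using nn by simp
  next
    case False
    then have ts: "0 < \<theta> s" using nn by (simp add: less_le)
    have Is: "I s = I j0" using Ieq sn free by blast
    have Ij: "I j = I j0" using Ieq that by blast
    have le: "iprr_score n f \<theta> \<pi> j \<le> iprr_score n f \<theta> \<pi> s" using smax that by blast
    show ?thesis
    proof (cases "\<theta> j = 0")
      case True
      then have "iprr_score n f \<theta> \<pi> j = \<infinity>" using sc[of j] Ij j0 by simp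
      moreover have "iprr_score n f \<theta> \<pi> s = ereal (I s / \<theta> s)" using sc[of s] False by simp
      ultimately show ?thesis using le by simp
    next
      case False2: False
      then have tj: "0 < \<theta> j" using nn by (simp add: less_le)
      have "I j0 / \<theta> j \<le> I j0 / \<theta> s" using le sc[of j] sc[of s] False False2 Is Ij by simp
      then show ?thesis using j0(3) ts tj by (simp add: divide_le_cancel frac_le_eq field_simps)
    qed
  qed
  show ?thesis using sn free mn unfolding s_def by blast
qed

locale iprr_ctx =
  fixes n :: nat and f :: "(nat \<Rightarrow> bool) \<Rightarrow> bool" and c :: "nat \<Rightarrow> real"
    and eps :: real and beta :: real and sel :: "(nat \<Rightarrow> real) \<Rightarrow> (nat \<rightharpoonup> bool) \<Rightarrow> nat"
  assumes sym: "symmetric_fun n f" and cpos: "\<forall>i<n. 0 \<le> c i" and eps0: "0 < eps"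
    and eps1: "eps \<le> 1/2" and b0: "0 < beta" and vs: "valid_selection n f eps sel"
begin

definition st where "st x t = iprr_state c beta sel x t"
abbreviation th where "th x t \<equiv> fst (st x t)"
abbreviation pm where "pm x t \<equiv> snd (st x t)"
definition sl where "sl x t = sel (th x t) (pm x t)"
definition running where "running x t \<longleftrightarrow> (\<forall>k<t. eps < bias n (restrict_fun f (pm x k)))"

lemma st_0: "st x 0 = (\<lambda>_. 0, Map.empty)" by (simp add: st_def iprr_state_def)

lemma st_Suc: "st x (Suc t) = iprr_step c beta sel x (st x t)"
  by (simp add: st_def iprr_state_def)

lemma th_Suc: "th x (Suc t) = (th x t)(sl x t := th x t (sl x t) + beta)"
  by (simp add: st_Suc iprr_step_def Let_def sl_def)

lemma pm_Suc: "pm x (Suc t) = (if c (sl x t) \<le> th x t (sl x t) + beta then (pm x t)(sl x t \<mapsto> x (sl x t)) else pm x t)"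
  by (simp add: st_Suc iprr_step_def Let_def sl_def)

lemma stop_iff: "iprr_stop n f eps c beta sel x k \<longleftrightarrow> bias n (restrict_fun f (pm x k)) \<le> eps"
  by (simp add: iprr_stop_def st_def)

lemma th_mono_step: "th x t i \<le> th x (Suc t) i"
  using b0 by (simp add: th_Suc)

lemma th_mono: "t \<le> t' \<Longrightarrow> th x t i \<le> th x t' i"
proof (induction t' rule: dec_induct)
  case base then show ?case by simp
next
  case (step m) then show ?case using th_mono_step[of x m i] by linarith
qed

lemma pm_mono_step: "pm x t i \<noteq> None \<Longrightarrow> pm x (Suc t) i \<noteq> None"
  by (simp add: pm_Suc)

lemma pm_mono: "t \<le> t' \<Longrightarrow> pm x t i \<noteq> None \<Longrightarrow> pm x t' i \<noteq> None"
proof (induction t' rule: dec_induct)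
  case base then show ?case by simp
next
  case (step m) then show ?case using pm_mono_step by blast
qed

definition inv where
  "inv x t \<longleftrightarrow> (\<forall>i. n \<le> i \<longrightarrow> th x t i = 0 \<and> pm x t i = None)
     \<and> (\<forall>i. pm x t i \<noteq> None \<longrightarrow> pm x t i = Some (x i))
     \<and> (\<forall>i. \<exists>k::nat. th x t i = beta * k)
     \<and> (\<forall>i<n. pm x t i = None \<longrightarrow> 0 < th x t i \<longrightarrow> th x t i < c i)
     \<and> (\<forall>i<n. th x t i \<le> c i + beta)
     \<and> (\<Sum>i<n. th x t i) = beta * t"

lemma inv_nonneg: "inv x t \<Longrightarrow> 0 \<le> th x t i"
  unfolding inv_def using b0 by (metis mult_nonneg_nonneg of_nat_0_le_iff less_imp_le)

lemma inv_dom: "inv x t \<Longrightarrow> \<forall>k. pm x t k \<noteq> None \<longrightarrow> k < n"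
  unfolding inv_def by (meson not_le)

lemma sel_step:
  assumes "inv x t" "eps < bias n (restrict_fun f (pm x t))"
  shows "sl x t < n \<and> pm x t (sl x t) = None \<and> (\<forall>j<n. pm x t j = None \<longrightarrow> th x t (sl x t) \<le> th x t j)"
  unfolding sl_def
  by (rule sel_props[OF sym vs eps0 inv_dom[OF assms(1)] _ assms(2)]) (simp add: inv_nonneg[OF assms(1)])

lemma free_le_c: "inv x t \<Longrightarrow> i < n \<Longrightarrow> pm x t i = None \<Longrightarrow> th x t i \<le> c i"
  using cpos inv_nonneg[of x t i] unfolding inv_def by (metis less_eq_real_def)

lemma inv_step:
  assumes I: "inv x t" and b: "eps < bias n (restrict_fun f (pm x t))"
  shows "inv x (Suc t)"
proof -
  define s where "s = sl x t"
  have S: "s < n" "pm x t s = None" using sel_step[OF I b] unfolding s_def by auto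
  have thS: "th x (Suc t) = (th x t)(s := th x t s + beta)" by (simp add: th_Suc s_def)
  have pmS: "pm x (Suc t) = (if c s \<le> th x t s + beta then (pm x t)(s \<mapsto> x s) else pm x t)"
    by (simp add: pm_Suc s_def)
  have I1: "\<forall>i. n \<le> i \<longrightarrow> th x t i = 0 \<and> pm x t i = None"
   and I2: "\<forall>i. pm x t i \<noteq> None \<longrightarrow> pm x t i = Some (x i)"
   and I3: "\<forall>i. \<exists>k::nat. th x t i = beta * k"
   and I4: "\<forall>i<n. pm x t i = None \<longrightarrow> 0 < th x t i \<longrightarrow> th x t i < c i"
   and I5: "\<forall>i<n. th x t i \<le> c i + beta"
   and I6: "(\<Sum>i<n. th x t i) = beta * t"
    using I unfolding inv_def by blast+
  have sle: "th x t s \<le> c s" using free_le_c[OF I S] .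
  have J1: "\<forall>i. n \<le> i \<longrightarrow> th x (Suc t) i = 0 \<and> pm x (Suc t) i = None"
    using I1 S(1) by (auto simp: thS pmS)
  have J2: "\<forall>i. pm x (Suc t) i \<noteq> None \<longrightarrow> pm x (Suc t) i = Some (x i)"
    using I2 by (auto simp: pmS)
  have J3: "\<forall>i. \<exists>k::nat. th x (Suc t) i = beta * k"
  proof
    fix i
    show "\<exists>k::nat. th x (Suc t) i = beta * k"
    proof (cases "i = s")
      case True
      obtain k :: nat where "th x t s = beta * k" using I3 by blast
      then have "th x (Suc t) i = beta * (Suc k)" using True by (simp add: thS algebra_simps)
      then show ?thesis by blast
    next
      case False then show ?thesis using I3 by (simp add: thS)
    qed
  qed
  have J4: "\<forall>i<n. pm x (Suc t) i = None \<longrightarrow> 0 < th x (Suc t) i \<longrightarrow> th x (Suc t) i < c i"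
    using I4 by (auto simp: thS pmS split: if_splits)
  have J5: "\<forall>i<n. th x (Suc t) i \<le> c i + beta"
    using I5 sle by (auto simp: thS)
  have "(\<Sum>i<n. th x (Suc t) i) = (\<Sum>i<n. th x t i + (if i = s then beta else 0))"
    by (rule sum.cong) (auto simp: thS)
  also have "\<dots> = (\<Sum>i<n. th x t i) + beta" using S(1) by (simp add: sum.distrib)
  finally have J6: "(\<Sum>i<n. th x (Suc t) i) = beta * Suc t" using I6 by (simp add: algebra_simps)
  show ?thesis unfolding inv_def using J1 J2 J3 J4 J5 J6 by blast
qed

lemma inv_run: "running x t \<Longrightarrow> inv x t"
proof (induction t)
  case 0
  show ?case unfolding inv_def by (simp add: st_0 cpos b0 less_imp_le)
next
  case (Suc t)
  then have r: "running x t" and b: "eps < bias n (restrict_fun f (pm x t))"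
    unfolding running_def by auto
  show ?case by (rule inv_step[OF Suc.IH[OF r] b])
qed

lemma halts: "\<exists>k. iprr_stop n f eps c beta sel x k"
proof (rule ccontr)
  assume "\<not> ?thesis"
  then have r: "running x t" for t unfolding running_def stop_iff by (meson not_le)
  define M where "M = (\<Sum>i<n. c i + beta)"
  have bound: "beta * t \<le> M" for t :: nat
  proof -
    have I: "inv x t" by (rule inv_run[OF r])
    then have "(\<Sum>i<n. th x t i) \<le> M" unfolding M_def inv_def by (intro sum_mono) auto
    then show ?thesis using I unfolding inv_def by simp
  qed
  obtain t :: nat where "M / beta < t" using reals_Archimedean2 by blast
  then have "M < beta * t" using b0 by (simp add: field_simps)
  then show False using bound[of t] by simp
qed

definition T where "T x = iprr_time n f eps c beta sel x"

lemma T_stop: "bias n (restrict_fun f (pm x (T x))) \<le> eps"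
  using LeastI_ex[OF halts[of x]] unfolding T_def iprr_time_def stop_iff .

lemma T_run: "running x (T x)"
  unfolding running_def T_def iprr_time_def
  using not_less_Least[where P="\<lambda>k. iprr_stop n f eps c beta sel x k"] stop_iff by (meson not_le)

lemma T_inv: "inv x (T x)" by (rule inv_run[OF T_run])

lemma final_eq: "iprr_final n f eps c beta sel x = st x (T x)"
  by (simp add: iprr_final_def T_def st_def)

lemma cost_eq: "iprr_cost n f eps c beta sel x = beta * T x"
  using T_inv[of x] unfolding iprr_cost_def final_eq inv_def by simp

end


section \<open>Numeric tail estimates\<close>

lemma binom_tail:
  fixes m q :: nat
  assumes "4 * q \<le> m"
  shows "real (\<Sum>k<q. m choose k) \<le> 3 powr (real m / 4) * (4/3) ^ m"
proof -
  have "real (\<Sum>k<q. m choose k) = (\<Sum>k<q. real (m choose k))" by simp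
  also have "\<dots> \<le> (\<Sum>k<q. real (m choose k) * (3 powr (real m / 4) / 3 ^ k))"
  proof (rule sum_mono)
    fix k assume "k \<in> {..<q}"
    then have "real k \<le> real m / 4" using assms by simp
    then have "1 \<le> 3 powr (real m / 4 - real k)" by (simp add: ge_one_powr_ge_zero)
    also have "3 powr (real m / 4 - real k) = 3 powr (real m / 4) / 3 ^ k"
      by (simp add: powr_diff powr_realpow)
    finally have h: "1 \<le> 3 powr (real m / 4) / 3 ^ k" .
    show "real (m choose k) \<le> real (m choose k) * (3 powr (real m / 4) / 3 ^ k)"
      using mult_left_mono[OF h, of "real (m choose k)"] by simp
  qed
  also have "\<dots> \<le> (\<Sum>k\<le>m. real (m choose k) * (3 powr (real m / 4) / 3 ^ k))"
    by (rule sum_mono2) (use assms in auto)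
  also have "\<dots> = 3 powr (real m / 4) * (\<Sum>k\<le>m. real (m choose k) * (1/3) ^ k * 1 ^ (m - k))"
    by (simp add: sum_distrib_left field_simps power_divide)
  also have "(\<Sum>k\<le>m. real (m choose k) * (1/3) ^ k * 1 ^ (m - k)) = (1/3 + 1) ^ m"
    by (rule binomial_ring[symmetric])
  also have "(1/3 + 1 :: real) = 4/3" by simp
  finally show ?thesis .
qed

lemma ln2_ge: "1/2 \<le> ln (2::real)"
proof -
  have "ln (1/2::real) \<le> 1/2 - 1" by (rule ln_le_minus_one) simp
  then show ?thesis by (simp add: ln_div)
qed

lemma ln_27_16: "2/5 \<le> 3 * ln (3::real) - 4 * ln 2"
proof -
  have "ln (16/27::real) \<le> 16/27 - 1" by (rule ln_le_minus_one) simp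
  moreover have "ln (16/27::real) = 4 * ln 2 - 3 * ln 3"
  proof -
    have "ln (16/27::real) = ln 16 - ln 27" by (simp add: ln_div)
    moreover have "ln (16::real) = 4 * ln 2"
      using ln_realpow[of 2 4] by simp
    moreover have "ln (27::real) = 3 * ln 3"
      using ln_realpow[of 3 3] by simp
    ultimately show ?thesis by simp
  qed
  ultimately show ?thesis by simp
qed

lemma tail_small:
  fixes m :: nat and eps :: real
  assumes eps0: "0 < eps" and eps1: "eps \<le> 1/2" and big: "20 * ln (1/eps) < real m"
  shows "2 * (3 powr (real m / 4) * (4/3) ^ m) / 2 ^ m < eps"
proof -
  define L where "L = 2 * (3 powr (real m / 4) * (4/3) ^ m) / 2 ^ m"
  have Lpos: "0 < L" unfolding L_def by simp
  have "ln L = ln 2 + (real m / 4) * ln 3 + real m * (ln 4 - ln 3) - real m * ln 2"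
    unfolding L_def by (simp add: ln_mult ln_div ln_powr ln_realpow)
  also have "ln (4::real) = 2 * ln 2" using ln_realpow[of 2 2] by simp
  finally have lnL0: "ln L = ln 2 + (real m / 4) * ln 3 + real m * (2 * ln 2 - ln 3) - real m * ln 2" .
  have a1: "(real m / 4) * ln 3 = (real m * ln 3) / 4" by simp
  have a2: "real m * (2 * ln 2 - ln 3) = 2 * (real m * ln 2) - real m * ln 3"
    by (simp add: right_diff_distrib)
  have a3: "real m * (3 * ln 3 - 4 * ln 2) = 3 * (real m * ln 3) - 4 * (real m * ln 2)"
    by (simp add: right_diff_distrib)
  have "real m * (2/5) \<le> real m * (3 * ln 3 - 4 * ln 2)"
    using ln_27_16 by (intro mult_left_mono) auto
  then have "ln L \<le> ln 2 - real m / 10" using lnL0 a1 a2 a3 by linarith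
  also have "\<dots> < ln 2 - 2 * ln (1/eps)" using big by simp
  also have "\<dots> \<le> ln eps"
  proof -
    have "ln 2 \<le> ln (1/eps)" using eps0 eps1 by (simp add: field_simps)
    moreover have "ln (1/eps) = - ln eps" using eps0 by (simp add: ln_div)
    ultimately show ?thesis by simp
  qed
  finally have "ln L < ln eps" .
  then show ?thesis using Lpos eps0 unfolding L_def by simp
qed

section \<open>Counting over the cube\<close>

lemma prob_weight:
  assumes F: "F \<subseteq> {..<n}"
  shows "prob n (\<lambda>z. P (card {i \<in> F. z i})) = real (card {S \<in> Pow F. P (card S)}) / 2 ^ card F"
proof -
  define G where "G = {..<n} - F"
  define h where "h z = ({i \<in> F. z i}, {i \<in> G. z i})" for z :: "nat \<Rightarrow> bool"
  define h' where "h' p = (\<lambda>i. i \<in> fst p \<union> snd p)" for p :: "nat set \<times> nat set"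
  have finF: "finite F" using F finite_subset by blast
  have finG: "finite G" unfolding G_def by simp
  have bij: "bij_betw h {z \<in> cube n. P (card {i \<in> F. z i})} ({S \<in> Pow F. P (card S)} \<times> Pow G)"
  proof (rule bij_betw_byWitness[where f'=h'])
    show "\<forall>a\<in>{z \<in> cube n. P (card {i \<in> F. z i})}. h' (h a) = a"
    proof (intro ballI ext)
      fix z i assume "z \<in> {z \<in> cube n. P (card {i \<in> F. z i})}"
      then have "z \<in> cube n" by simp
      then have "z i \<Longrightarrow> i < n" by (simp add: cube_iff)
      then show "h' (h z) i = z i" unfolding h_def h'_def G_def by auto
    qed
    show "\<forall>a'\<in>{S \<in> Pow F. P (card S)} \<times> Pow G. h (h' a') = a'"
    proof
      fix p assume "p \<in> {S \<in> Pow F. P (card S)} \<times> Pow G"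
      then obtain S R where SR: "p = (S, R)" "S \<subseteq> F" "R \<subseteq> G" by auto
      have "{i \<in> F. i \<in> S \<union> R} = S" using SR unfolding G_def by auto
      moreover have "{i \<in> G. i \<in> S \<union> R} = R" using SR unfolding G_def by auto
      ultimately show "h (h' p) = p" unfolding h_def h'_def SR(1) by simp
    qed
    show "h ` {z \<in> cube n. P (card {i \<in> F. z i})} \<subseteq> {S \<in> Pow F. P (card S)} \<times> Pow G"
      unfolding h_def G_def by (auto simp: cube_iff)
    show "h' ` ({S \<in> Pow F. P (card S)} \<times> Pow G) \<subseteq> {z \<in> cube n. P (card {i \<in> F. z i})}"
    proof
      fix z assume "z \<in> h' ` ({S \<in> Pow F. P (card S)} \<times> Pow G)"
      then obtain S R where SR: "S \<subseteq> F" "P (card S)" "R \<subseteq> G" "z = h' (S, R)" by auto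
      have "{i \<in> F. z i} = S" using SR unfolding h'_def G_def by auto
      moreover have "z \<in> cube n" using SR F unfolding h'_def G_def by (auto simp: cube_iff)
      ultimately show "z \<in> {z \<in> cube n. P (card {i \<in> F. z i})}" using SR by simp
    qed
  qed
  have "card {z \<in> cube n. P (card {i \<in> F. z i})} = card {S \<in> Pow F. P (card S)} * 2 ^ card G"
    using bij_betw_same_card[OF bij] by (simp add: card_cartesian_product card_Pow finG)
  moreover have "card F + card G = n"
  proof -
    have "card ({..<n} - F) = n - card F" using F by (simp add: card_Diff_subset finF)
    moreover have "card F \<le> n" using card_mono[OF finite_lessThan F] by simp
    ultimately show ?thesis unfolding G_def by simp
  qed
  then have "(2::real) ^ n = 2 ^ card F * 2 ^ card G"
    using power_add[of "2::real" "card F" "card G"] by simp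
  ultimately show ?thesis unfolding prob_def by simp
qed

lemma card_tails:
  assumes finF: "finite F" and qm: "q \<le> card F"
  shows "card {S \<in> Pow F. card S < q \<or> card F - q < card S} \<le> 2 * (\<Sum>k<q. card F choose k)"
proof -
  define A where "A = {S \<in> Pow F. card S < q}"
  have "A = (\<Union>k\<in>{..<q}. {S. S \<subseteq> F \<and> card S = k})" unfolding A_def by auto
  then have cA: "card A \<le> (\<Sum>k<q. card F choose k)"
    using card_UN_le[of "{..<q}" "\<lambda>k. {S. S \<subseteq> F \<and> card S = k}"] n_subsets[OF finF] by simp
  have sub: "{S \<in> Pow F. card F - q < card S} \<subseteq> (\<lambda>T. F - T) ` A"
  proof
    fix S assume S: "S \<in> {S \<in> Pow F. card F - q < card S}"
    then have "S \<subseteq> F" by simp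
    then have "card (F - S) = card F - card S" using finF by (simp add: card_Diff_subset finite_subset)
    moreover have "card S \<le> card F" using \<open>S \<subseteq> F\<close> finF by (simp add: card_mono)
    ultimately have "F - S \<in> A" using S qm unfolding A_def by auto
    moreover have "S = F - (F - S)" using S by auto
    ultimately show "S \<in> (\<lambda>T. F - T) ` A" by blast
  qed
  have finA: "finite A" unfolding A_def using finF by simp
  have "card {S \<in> Pow F. card F - q < card S} \<le> card ((\<lambda>T. F - T) ` A)"
    by (rule card_mono[OF finite_imageI[OF finA] sub])
  also have "\<dots> \<le> card A" by (rule card_image_le[OF finA])
  finally have cB: "card {S \<in> Pow F. card F - q < card S} \<le> card A" .
  have "{S \<in> Pow F. card S < q \<or> card F - q < card S} = A \<union> {S \<in> Pow F. card F - q < card S}"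
    unfolding A_def by auto
  then have "card {S \<in> Pow F. card S < q \<or> card F - q < card S} \<le> card A + card {S \<in> Pow F. card F - q < card S}"
    by (simp add: card_Un_le)
  then show ?thesis using cA cB by simp
qed



lemma claimA:
  assumes sym: "symmetric_fun n f" and x: "x \<in> cube n"
    and dom: "\<forall>k. \<pi> k \<noteq> None \<longrightarrow> k < n"
    and cons: "\<forall>k. \<pi> k \<noteq> None \<longrightarrow> \<pi> k = Some (x k)"
    and Q: "Q \<subseteq> {..<n}"
    and cert: "\<forall>y\<in>cube n. (\<forall>i\<in>Q. y i = x i) \<longrightarrow> f y = f x"
    and F: "F = {i. i < n \<and> \<pi> i = None}"
    and z: "z \<in> cube n"
    and lo: "card (Q \<inter> F) \<le> card {i \<in> F. z i}"
    and hi: "card {i \<in> F. z i} \<le> card F - card (Q \<inter> F)"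
  shows "restrict_fun f \<pi> z = f x"
proof -
  define wz where "wz = card {i \<in> F. z i}"
  define P1 where "P1 = {i \<in> Q \<inter> F. x i}"
  define D1 where "D1 = {i. i < n \<and> \<pi> i \<noteq> None \<and> x i}"
  have finF: "finite F" unfolding F by simp
  have q1: "card P1 \<le> card (Q \<inter> F)" unfolding P1_def by (rule card_mono) (use finF in auto)
  have cFQ: "card (F - Q) = card F - card (Q \<inter> F)"
  proof -
    have "F - Q = F - (Q \<inter> F)" by auto
    then show ?thesis using finF by (simp add: card_Diff_subset)
  qed
  have "wz - card P1 \<le> card (F - Q)" using hi cFQ unfolding wz_def by linarith
  then obtain W where W: "W \<subseteq> F - Q" "card W = wz - card P1" "finite W"
    by (rule obtain_subset_with_card_n)
  define y where "y i = (if \<pi> i \<noteq> None \<or> i \<in> Q then x i else i \<in> W)" for i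
  have ycube: "y \<in> cube n"
    unfolding cube_iff
  proof (intro allI impI)
    fix i assume "y i"
    show "i < n"
    proof (cases "\<pi> i \<noteq> None")
      case True then show ?thesis using dom by blast
    next
      case False
      then show ?thesis using \<open>y i\<close> Q W(1) unfolding y_def F by (auto split: if_splits)
    qed
  qed
  have fy: "f y = f x" using cert ycube unfolding y_def by auto
  have setY: "{i. i < n \<and> y i} = D1 \<union> P1 \<union> W"
  proof
    show "{i. i < n \<and> y i} \<subseteq> D1 \<union> P1 \<union> W"
      unfolding y_def D1_def P1_def F by auto
    show "D1 \<union> P1 \<union> W \<subseteq> {i. i < n \<and> y i}"
      using W(1) unfolding y_def D1_def P1_def F by auto
  qed
  have finD1: "finite D1" unfolding D1_def by simp
  have finP1: "finite P1" unfolding P1_def using finF by simp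
  have "card {i. i < n \<and> y i} = card (D1 \<union> P1) + card W"
    unfolding setY
    by (rule card_Un_disjoint) (use finD1 finP1 W in \<open>auto simp: D1_def P1_def F\<close>)
  also have "card (D1 \<union> P1) = card D1 + card P1"
    by (rule card_Un_disjoint) (use finD1 finP1 in \<open>auto simp: D1_def P1_def F\<close>)
  finally have cy: "card {i. i < n \<and> y i} = card D1 + wz"
    using W(2) q1 lo unfolding wz_def by linarith
  define z' where "z' = mrg \<pi> z"
  have z'cube: "z' \<in> cube n" unfolding z'_def by (rule mrg_cube[OF z dom])
  have z'i: "z' i = (if \<pi> i \<noteq> None then x i else z i)" for i
    using cons unfolding z'_def mrg_def by (cases "\<pi> i") auto
  have setZ: "{i. i < n \<and> z' i} = D1 \<union> {i \<in> F. z i}"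
    unfolding z'i D1_def F by auto
  have "card {i. i < n \<and> z' i} = card D1 + card {i \<in> F. z i}"
    unfolding setZ by (rule card_Un_disjoint) (use finD1 finF in \<open>auto simp: D1_def F\<close>)
  then have cz: "card {i. i < n \<and> z' i} = card {i. i < n \<and> y i}" using cy unfolding wz_def by simp
  have "f z' = f y" using sym z'cube ycube cz unfolding symmetric_fun_def by blast
  then show ?thesis using fy unfolding restrict_mrg z'_def by simp
qed

lemma core:
  assumes sym: "symmetric_fun n f" and x: "x \<in> cube n"
    and dom: "\<forall>k. \<pi> k \<noteq> None \<longrightarrow> k < n"
    and cons: "\<forall>k. \<pi> k \<noteq> None \<longrightarrow> \<pi> k = Some (x k)"
    and Q: "Q \<subseteq> {..<n}"
    and cert: "\<forall>y\<in>cube n. (\<forall>i\<in>Q. y i = x i) \<longrightarrow> f y = f x"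
    and F: "F = {i. i < n \<and> \<pi> i = None}"
    and eps0: "0 < eps" and eps1: "eps \<le> 1/2"
    and b: "eps < bias n (restrict_fun f \<pi>)"
  shows "real (card F) \<le> 20 * ln (1/eps) * real (card (Q \<inter> F))"
proof -
  define m where "m = card F"
  define q where "q = card (Q \<inter> F)"
  have finF: "finite F" unfolding F by simp
  have FS: "F \<subseteq> {..<n}" unfolding F by auto
  have qm: "q \<le> m" unfolding q_def m_def by (rule card_mono[OF finF]) auto
  have lnpos: "1/2 \<le> ln (1/eps)"
  proof -
    have "ln 2 \<le> ln (1/eps)" using eps0 eps1 by (simp add: field_simps)
    then show ?thesis using ln2_ge by linarith
  qed
  have "bias n (restrict_fun f \<pi>) \<le> prob n (\<lambda>z. restrict_fun f \<pi> z \<noteq> f x)"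
    by (rule bias_le_prob)
  also have "\<dots> \<le> prob n (\<lambda>z. (\<lambda>w. w < q \<or> m - q < w) (card {i \<in> F. z i}))"
  proof (rule prob_mono)
    fix z assume z: "z \<in> cube n" and ne: "restrict_fun f \<pi> z \<noteq> f x"
    show "(\<lambda>w. w < q \<or> m - q < w) (card {i \<in> F. z i})"
    proof (rule ccontr)
      assume "\<not> ?thesis"
      then have "card (Q \<inter> F) \<le> card {i \<in> F. z i}" "card {i \<in> F. z i} \<le> card F - card (Q \<inter> F)"
        unfolding q_def m_def by auto
      then have "restrict_fun f \<pi> z = f x" by (rule claimA[OF sym x dom cons Q cert F z])
      then show False using ne by simp
    qed
  qed
  also have "\<dots> = real (card {S \<in> Pow F. card S < q \<or> m - q < card S}) / 2 ^ m"
    unfolding m_def by (rule prob_weight[OF FS])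
  also have "\<dots> \<le> real (2 * (\<Sum>k<q. m choose k)) / 2 ^ m"
  proof -
    have "card {S \<in> Pow F. card S < q \<or> m - q < card S} \<le> 2 * (\<Sum>k<q. m choose k)"
      using card_tails[OF finF, of q] qm unfolding m_def by simp
    then have "real (card {S \<in> Pow F. card S < q \<or> m - q < card S}) \<le> real (2 * (\<Sum>k<q. m choose k))"
      by (rule of_nat_mono)
    then show ?thesis by (rule divide_right_mono) simp
  qed
  finally have bb: "eps < real (2 * (\<Sum>k<q. m choose k)) / 2 ^ m" using b by linarith
  show ?thesis
  proof (cases "q = 0")
    case True
    then show ?thesis using bb eps0 by simp
  next
    case False
    then have q1: "1 \<le> real q" by simp
    show ?thesis
    proof (cases "m \<le> 4 * q")
      case True
      have "real m \<le> 4 * real q" using True by linarith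
      also have "\<dots> \<le> 20 * ln (1/eps) * real q" using lnpos q1 by (intro mult_right_mono) auto
      finally show ?thesis unfolding m_def q_def .
    next
      case False
      show ?thesis
      proof (cases "real m \<le> 20 * ln (1/eps)")
        case True
        have "real m \<le> 20 * ln (1/eps) * 1" using True by simp
        also have "\<dots> \<le> 20 * ln (1/eps) * real q" using lnpos q1 by (intro mult_left_mono) auto
        finally show ?thesis unfolding m_def q_def .
      next
        case big: False
        have "real (2 * (\<Sum>k<q. m choose k)) = 2 * real (\<Sum>k<q. m choose k)" by simp
        also have "\<dots> \<le> 2 * (3 powr (real m / 4) * (4/3) ^ m)"
          using binom_tail[of q m] False by simp
        finally have "real (2 * (\<Sum>k<q. m choose k)) / 2 ^ m \<le> 2 * (3 powr (real m / 4) * (4/3) ^ m) / 2 ^ m"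
          by (intro divide_right_mono) simp_all
        also have "\<dots> < eps" by (rule tail_small[OF eps0 eps1]) (use big in linarith)
        finally show ?thesis using bb by linarith
      qed
    qed
  qed
qed



lemma ind_card: "finite A \<Longrightarrow> real (card {j \<in> A. P j}) = (\<Sum>j\<in>A. if P j then 1 else 0)"
  by (simp add: sum.inter_filter[symmetric])

lemma count_levels:
  assumes b0: "0 < beta" and c0: "0 \<le> cc"
  shows "beta * real (card {l \<in> {1..N::nat}. beta * real l < cc}) \<le> cc"
proof (cases "{l \<in> {1..N}. beta * real l < cc} = {}")
  case True
  then have e: "card {l \<in> {1..N}. beta * real l < cc} = 0" by (simp only: card.empty)
  show ?thesis unfolding e using c0 by simp
next
  case False
  define S where "S = {l \<in> {1..N}. beta * real l < cc}"
  have finS: "finite S" unfolding S_def by simp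
  define M where "M = Max S"
  have MS: "M \<in> S" unfolding M_def using False finS Max_in S_def by blast
  have "S \<subseteq> {1..M}" unfolding M_def using finS by (auto simp: S_def)
  then have "card S \<le> M" using card_mono[of "{1..M}" S] by simp
  then have "beta * real (card S) \<le> beta * real M" using b0 by simp
  also have "\<dots> < cc" using MS unfolding S_def by simp
  finally show ?thesis unfolding S_def by simp
qed

context iprr_ctx
begin

lemma run_less: "t < T x \<Longrightarrow> inv x t \<and> eps < bias n (restrict_fun f (pm x t))"
proof -
  assume t: "t < T x"
  have r: "running x (T x)" by (rule T_run)
  then have "running x t" using t unfolding running_def by auto
  then have "inv x t" by (rule inv_run)
  moreover have "eps < bias n (restrict_fun f (pm x t))" using r t unfolding running_def by auto
  ultimately show ?thesis by blast
qed

definition lev where "lev x t = nat \<lfloor>th x t (sl x t) / beta\<rfloor>"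

lemma lev_th: assumes "t < T x" shows "th x t (sl x t) = beta * real (lev x t)"
proof -
  have "inv x t" using run_less[OF assms] by blast
  then obtain k :: nat where k: "th x t (sl x t) = beta * k" unfolding inv_def by blast
  then have "th x t (sl x t) / beta = real k" using b0 by simp
  then have "lev x t = k" unfolding lev_def by simp
  then show ?thesis using k by simp
qed

lemma lev_le: assumes "t < T x" shows "lev x t \<le> T x"
proof -
  have I: "inv x t" and b: "eps < bias n (restrict_fun f (pm x t))" using run_less[OF assms] by blast+
  have sn: "sl x t < n" using sel_step[OF I b] by blast
  have "th x t (sl x t) \<le> (\<Sum>i<n. th x t i)"
    by (rule member_le_sum) (use sn inv_nonneg[OF I] in auto)
  also have "\<dots> = beta * t" using I unfolding inv_def by blast
  finally have "beta * real (lev x t) \<le> beta * real t" using lev_th[OF assms] by simp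
  then have "lev x t \<le> t" using b0 by simp
  then show ?thesis using assms by simp
qed

lemma lev_inj_aux:
  assumes "t1 < t2" "t2 < T x" "lev x t1 = lev x t2" "sl x t1 = sl x t2"
  shows False
proof -
  have t1: "t1 < T x" using assms by simp
  have "th x (Suc t1) (sl x t1) = th x t1 (sl x t1) + beta" by (simp add: th_Suc)
  moreover have "th x (Suc t1) (sl x t1) \<le> th x t2 (sl x t1)" using assms(1) by (intro th_mono) simp
  ultimately have "th x t1 (sl x t1) + beta \<le> th x t2 (sl x t2)" using assms(4) by simp
  then show False using lev_th[OF t1] lev_th[OF assms(2)] assms(3) b0 by simp
qed

lemma lev_inj:
  assumes "t1 < T x" "t2 < T x" "lev x t1 = lev x t2" "sl x t1 = sl x t2"
  shows "t1 = t2"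
  using lev_inj_aux[of t1 t2 x] lev_inj_aux[of t2 t1 x] assms by (metis linorder_neqE_nat)

lemma cost_bound:
  assumes x: "x \<in> cube n" and Q: "Q \<subseteq> {..<n}"
    and cert: "\<forall>y\<in>cube n. (\<forall>i\<in>Q. y i = x i) \<longrightarrow> f y = f x"
  shows "beta * real (T x) \<le> beta * real n + 20 * ln (1/eps) * (\<Sum>i\<in>Q. c i)"
proof -
  define K where "K = 20 * ln (1/eps)"
  have K0: "0 \<le> K" unfolding K_def using eps0 eps1 by simp
  define TT where "TT = T x"
  define fib where "fib l = {t \<in> {..<TT}. lev x t = l}" for l
  have finQ: "finite Q" using Q finite_subset by blast
  have sumfib: "real TT = (\<Sum>l\<in>{..TT}. real (card (fib l)))"
  proof -
    have "(\<Sum>l\<in>{..TT}. sum (\<lambda>_. 1::real) {t \<in> {..<TT}. lev x t = l}) = sum (\<lambda>_. 1::real) {..<TT}"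
      by (rule sum.group) (use lev_le in \<open>auto simp: TT_def\<close>)
    then show ?thesis unfolding fib_def by simp
  qed
  have f0: "card (fib 0) \<le> n"
  proof -
    have "inj_on (sl x) (fib 0)"
      by (rule inj_onI) (use lev_inj in \<open>auto simp: fib_def TT_def\<close>)
    moreover have "sl x ` fib 0 \<subseteq> {..<n}"
    proof
      fix s assume "s \<in> sl x ` fib 0"
      then obtain t where t: "t < TT" "s = sl x t" unfolding fib_def by auto
      then show "s \<in> {..<n}" using sel_step run_less unfolding TT_def by blast
    qed
    ultimately show ?thesis using card_inj_on_le[of "sl x" "fib 0" "{..<n}"] by simp
  qed
  have fl: "real (card (fib l)) \<le> K * real (card {j \<in> Q. beta * real l < c j})" if l1: "1 \<le> l" for l
  proof (cases "fib l = {}")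
    case True then show ?thesis using K0 by simp
  next
    case False
    have finfib: "finite (fib l)" unfolding fib_def by simp
    define t0 where "t0 = Min (fib l)"
    have t0in: "t0 \<in> fib l" unfolding t0_def using Min_in[OF finfib False] .
    have t0le: "t0 \<le> t" if "t \<in> fib l" for t unfolding t0_def using finfib that by simp
    have t0T: "t0 < T x" using t0in unfolding fib_def TT_def by simp
    have I0: "inv x t0" and b0': "eps < bias n (restrict_fun f (pm x t0))" using run_less[OF t0T] by blast+
    define Fr where "Fr = {j. j < n \<and> pm x t0 j = None}"
    have c1: "card (fib l) \<le> card Fr"
    proof -
      have "inj_on (sl x) (fib l)"
        by (rule inj_onI) (use lev_inj in \<open>auto simp: fib_def TT_def\<close>)
      moreover have "sl x ` fib l \<subseteq> Fr"
      proof
        fix s assume "s \<in> sl x ` fib l"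
        then obtain t where t: "t \<in> fib l" "s = sl x t" by auto
        have tT: "t < T x" using t(1) unfolding fib_def TT_def by simp
        have S: "sl x t < n" "pm x t (sl x t) = None" using sel_step run_less[OF tT] by blast+
        have "pm x t0 s = None"
        proof (rule ccontr)
          assume "pm x t0 s \<noteq> None"
          then have "pm x t s \<noteq> None" using pm_mono t0le[OF t(1)] by blast
          then show False using S t(2) by simp
        qed
        then show "s \<in> Fr" unfolding Fr_def using S t(2) by simp
      qed
      moreover have "finite Fr" unfolding Fr_def by simp
      ultimately show ?thesis by (rule card_inj_on_le)
    qed
    have cons: "\<forall>k. pm x t0 k \<noteq> None \<longrightarrow> pm x t0 k = Some (x k)" using I0 unfolding inv_def by blast
    have c2: "real (card Fr) \<le> K * real (card (Q \<inter> Fr))"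
      unfolding K_def
      by (rule core[OF sym x inv_dom[OF I0] cons Q cert Fr_def eps0 eps1 b0'])
    have sub: "Q \<inter> Fr \<subseteq> {j \<in> Q. beta * real l < c j}"
    proof
      fix j assume j: "j \<in> Q \<inter> Fr"
      then have jn: "j < n" and jf: "pm x t0 j = None" unfolding Fr_def by auto
      have S: "\<forall>j<n. pm x t0 j = None \<longrightarrow> th x t0 (sl x t0) \<le> th x t0 j"
        using sel_step[OF I0 b0'] by blast
      have "beta * real l = th x t0 (sl x t0)" using lev_th[OF t0T] t0in unfolding fib_def by simp
      also have "\<dots> \<le> th x t0 j" using S jn jf by blast
      finally have le: "beta * real l \<le> th x t0 j" .
      have "0 < beta * real l" using b0 l1 by simp
      then have "0 < th x t0 j" using le by linarith
      then have "th x t0 j < c j" using I0 jn jf unfolding inv_def by blast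
      then show "j \<in> {j \<in> Q. beta * real l < c j}" using j le by simp
    qed
    have c3: "card (Q \<inter> Fr) \<le> card {j \<in> Q. beta * real l < c j}"
      by (rule card_mono[OF _ sub]) (simp add: finQ)
    have "real (card (fib l)) \<le> real (card Fr)" using c1 by simp
    also have "\<dots> \<le> K * real (card (Q \<inter> Fr))" by (rule c2)
    also have "\<dots> \<le> K * real (card {j \<in> Q. beta * real l < c j})"
      using c3 K0 by (intro mult_left_mono) simp_all
    finally show ?thesis .
  qed
  have "{..TT} = insert 0 {1..TT}" by auto
  then have "real TT = real (card (fib 0)) + (\<Sum>l\<in>{1..TT}. real (card (fib l)))"
    using sumfib by simp
  also have "\<dots> \<le> real n + (\<Sum>l\<in>{1..TT}. K * real (card {j \<in> Q. beta * real l < c j}))"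
    using f0 fl by (intro add_mono sum_mono) auto
  also have "(\<Sum>l\<in>{1..TT}. K * real (card {j \<in> Q. beta * real l < c j}))
      = K * (\<Sum>j\<in>Q. real (card {l \<in> {1..TT}. beta * real l < c j}))"
  proof -
    have "(\<Sum>l\<in>{1..TT}. real (card {j \<in> Q. beta * real l < c j}))
        = (\<Sum>l\<in>{1..TT}. \<Sum>j\<in>Q. if beta * real l < c j then 1 else 0)"
      using finQ by (simp add: ind_card)
    also have "\<dots> = (\<Sum>j\<in>Q. \<Sum>l\<in>{1..TT}. if beta * real l < c j then 1 else 0)"
      by (rule sum.swap)
    also have "\<dots> = (\<Sum>j\<in>Q. real (card {l \<in> {1..TT}. beta * real l < c j}))"
      by (rule sum.cong[OF refl], rule ind_card[symmetric]) simp
    finally show ?thesis by (simp add: sum_distrib_left[symmetric])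
  qed
  finally have main: "real TT \<le> real n + K * (\<Sum>j\<in>Q. real (card {l \<in> {1..TT}. beta * real l < c j}))" .
  have "beta * (\<Sum>j\<in>Q. real (card {l \<in> {1..TT}. beta * real l < c j})) \<le> (\<Sum>j\<in>Q. c j)"
    unfolding sum_distrib_left
    by (rule sum_mono, rule count_levels[OF b0]) (use Q cpos in auto)
  then have "beta * (K * (\<Sum>j\<in>Q. real (card {l \<in> {1..TT}. beta * real l < c j}))) \<le> K * (\<Sum>j\<in>Q. c j)"
    using K0 by (metis mult.left_commute mult_left_mono)
  then have "beta * real TT \<le> beta * real n + K * (\<Sum>j\<in>Q. c j)"
    using main b0 by (smt (verit, best) distrib_left mult_left_mono)
  then show ?thesis unfolding TT_def K_def .
qed

end


context iprr_ctx
begin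

lemma class_inv:
  assumes agree: "\<forall>i. pm x (T x) i \<noteq> None \<longrightarrow> y i = x i"
  shows "t \<le> T x \<Longrightarrow> st y t = st x t"
proof (induction t)
  case 0 then show ?case by (simp add: st_0)
next
  case (Suc t)
  then have IH: "st y t = st x t" by simp
  define s where "s = sl x t"
  have sy: "sl y t = s" unfolding s_def sl_def IH ..
  have "th y (Suc t) = th x (Suc t)" using IH sy by (simp add: th_Suc s_def)
  moreover have "pm y (Suc t) = pm x (Suc t)"
  proof (cases "c s \<le> th x t s + beta")
    case True
    then have "pm x (Suc t) s \<noteq> None" by (simp add: pm_Suc s_def)
    then have "pm x (T x) s \<noteq> None" using pm_mono Suc.prems by blast
    then have "y s = x s" using agree by blast
    then show ?thesis using True IH sy by (simp add: pm_Suc s_def)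
  next
    case False
    then show ?thesis using IH sy by (simp add: pm_Suc s_def)
  qed
  ultimately show ?case by (simp add: prod_eq_iff)
qed

lemma class_T:
  assumes agree: "\<forall>i. pm x (T x) i \<noteq> None \<longrightarrow> y i = x i"
  shows "T y = T x" and "pm y (T y) = pm x (T x)"
proof -
  have eq: "k \<le> T x \<Longrightarrow> iprr_stop n f eps c beta sel y k = iprr_stop n f eps c beta sel x k" for k
    using class_inv[OF agree] by (simp add: stop_iff)
  have sx: "iprr_stop n f eps c beta sel x (T x)" using T_stop stop_iff by blast
  have nx: "\<not> iprr_stop n f eps c beta sel x k" if "k < T x" for k
    using run_less[OF that] stop_iff by (meson not_le)
  have "(LEAST k. iprr_stop n f eps c beta sel y k) = T x"
  proof (rule Least_equality)
    show "iprr_stop n f eps c beta sel y (T x)" using eq sx by simp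
    show "T x \<le> k" if "iprr_stop n f eps c beta sel y k" for k
      using that eq nx by (meson less_imp_le not_le)
  qed
  then show Ty: "T y = T x" unfolding T_def iprr_time_def .
  show "pm y (T y) = pm x (T x)" unfolding Ty using class_inv[OF agree] by simp
qed

definition outp where "outp x = iprr_output n f eps c beta sel x"

lemma outp_eq: "outp x \<longleftrightarrow> 1/2 \<le> prob n (\<lambda>y. restrict_fun f (pm x (T x)) y \<noteq> False)"
proof -
  have "(\<Sum>y\<in>cube n. if restrict_fun f (pm x (T x)) y then 1 else 0 :: real)
      = real (card {y \<in> cube n. restrict_fun f (pm x (T x)) y})"
    by (rule ind_card[symmetric]) (simp add: finite_cube)
  then show ?thesis unfolding outp_def iprr_output_def final_eq expect_def prob_def by simp
qed

lemma err_class: "prob n (\<lambda>z. restrict_fun f (pm x (T x)) z \<noteq> outp x) \<le> eps"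
proof -
  define g where "g = restrict_fun f (pm x (T x))"
  have c: "prob n (\<lambda>z. g z \<noteq> False) + prob n (\<lambda>z. g z \<noteq> True) = 1"
    using prob_compl[of n "\<lambda>z. g z \<noteq> False"] by simp
  have "prob n (\<lambda>z. g z \<noteq> outp x) = bias n g"
  proof (cases "outp x")
    case True
    then have "1/2 \<le> prob n (\<lambda>z. g z \<noteq> False)" using outp_eq g_def by simp
    then show ?thesis using True c unfolding bias_def by simp
  next
    case False
    then have "prob n (\<lambda>z. g z \<noteq> False) < 1/2" using outp_eq g_def by simp
    then show ?thesis using False c unfolding bias_def by simp
  qed
  then show ?thesis using T_stop g_def by simp
qed

lemma error_bound:
  "prob n (\<lambda>x. iprr_output n f eps c beta sel x \<noteq> f x) \<le> eps"
proof -
  define C where "C = cube n"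
  define D where "D x = {i. pm x (T x) i \<noteq> None}" for x
  define phi where "phi p = ((\<lambda>i. if i \<in> D (fst p) then fst p i else snd p i),
                            (\<lambda>i. if i \<in> D (fst p) then snd p i else fst p i))" for p :: "(nat \<Rightarrow> bool) \<times> (nat \<Rightarrow> bool)"
  define h where "h x = (if outp x \<noteq> f x then 1 else 0 :: real)" for x
  have finC: "finite C" unfolding C_def by (rule finite_cube)
  have Dfst: "D (fst (phi p)) = D (fst p)" and Tfst: "pm (fst (phi p)) (T (fst (phi p))) = pm (fst p) (T (fst p))" for p
  proof -
    have ag: "\<forall>i. pm (fst p) (T (fst p)) i \<noteq> None \<longrightarrow> fst (phi p) i = fst p i"
      unfolding phi_def D_def by simp
    show "pm (fst (phi p)) (T (fst (phi p))) = pm (fst p) (T (fst p))" by (rule class_T(2)[OF ag])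
    then show "D (fst (phi p)) = D (fst p)" unfolding D_def by simp
  qed
  have invol: "phi (phi p) = p" for p
    using Dfst[of p] unfolding phi_def by (auto simp: fun_eq_iff prod_eq_iff)
  have phiC: "phi p \<in> C \<times> C" if "p \<in> C \<times> C" for p
    using that unfolding phi_def C_def by (auto simp: cube_iff)
  have "(\<Sum>p\<in>C \<times> C. h (fst (phi p))) = (\<Sum>p\<in>C \<times> C. h (fst p))"
    by (rule sum.reindex_bij_witness[where i=phi and j=phi]) (auto simp: invol phiC)
  also have "\<dots> = (\<Sum>x\<in>C. \<Sum>z\<in>C. h x)"
    by (subst sum.cartesian_product) (simp add: case_prod_beta)
  also have "\<dots> = real (card C) * (\<Sum>x\<in>C. h x)"
    by (simp add: sum_distrib_left)
  finally have eq1: "(\<Sum>p\<in>C \<times> C. h (fst (phi p))) = real (card C) * (\<Sum>x\<in>C. h x)" .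
  have "(\<Sum>p\<in>C \<times> C. h (fst (phi p))) = (\<Sum>x\<in>C. \<Sum>z\<in>C. h (fst (phi (x, z))))"
    by (simp add: sum.cartesian_product)
  also have "\<dots> \<le> (\<Sum>x\<in>C. 2 ^ n * eps)"
  proof (rule sum_mono)
    fix x assume xC: "x \<in> C"
    have hz: "h (fst (phi (x, z))) = (if restrict_fun f (pm x (T x)) z \<noteq> outp x then 1 else 0)" for z
    proof -
      have o: "outp (fst (phi (x, z))) = outp x"
        unfolding outp_def iprr_output_def final_eq using Tfst[of "(x,z)"] by simp
      have cons: "\<forall>k. pm x (T x) k \<noteq> None \<longrightarrow> pm x (T x) k = Some (x k)"
        using T_inv[of x] unfolding inv_def by blast
      have "fst (phi (x, z)) = mrg (pm x (T x)) z"
      proof (rule ext)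
        fix i show "fst (phi (x, z)) i = mrg (pm x (T x)) z i"
          using cons unfolding phi_def D_def mrg_def by (cases "pm x (T x) i") auto
      qed
      then have "f (fst (phi (x, z))) = restrict_fun f (pm x (T x)) z" by (simp add: restrict_mrg)
      then show ?thesis unfolding h_def o by auto
    qed
    have "(\<Sum>z\<in>C. h (fst (phi (x, z)))) = real (card {z \<in> C. restrict_fun f (pm x (T x)) z \<noteq> outp x})"
      unfolding hz by (rule ind_card[symmetric, OF finC])
    also have "\<dots> = 2 ^ n * prob n (\<lambda>z. restrict_fun f (pm x (T x)) z \<noteq> outp x)"
      unfolding prob_def C_def by simp
    also have "\<dots> \<le> 2 ^ n * eps" using err_class[of x] by (intro mult_left_mono) simp_all
    finally show "(\<Sum>z\<in>C. h (fst (phi (x, z)))) \<le> 2 ^ n * eps" .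
  qed
  also have "\<dots> = real (card C) * (2 ^ n * eps)" by simp
  finally have "real (card C) * (\<Sum>x\<in>C. h x) \<le> real (card C) * (2 ^ n * eps)" using eq1 by simp
  moreover have "0 < real (card C)" unfolding C_def by (simp add: card_cube)
  ultimately have le: "(\<Sum>x\<in>C. h x) \<le> 2 ^ n * eps" by simp
  have "(\<Sum>x\<in>C. h x) = real (card {x \<in> C. outp x \<noteq> f x})"
    unfolding h_def by (rule ind_card[symmetric, OF finC])
  then have "real (card {x \<in> cube n. iprr_output n f eps c beta sel x \<noteq> f x}) \<le> 2 ^ n * eps"
    using le unfolding C_def outp_def by simp
  then show ?thesis unfolding prob_def by (simp add: field_simps)
qed

end


lemma dt_queried_sub: "dt_queried t x \<subseteq> dt_vars t"
  by (induction t) auto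

lemma dt_cert: "(\<forall>i\<in>dt_queried t x. y i = x i) \<Longrightarrow> dt_eval t y = dt_eval t x"
  by (induction t) auto

fun bt :: "((nat \<Rightarrow> bool) \<Rightarrow> bool) \<Rightarrow> nat list \<Rightarrow> (nat \<Rightarrow> bool) \<Rightarrow> dtree" where
  "bt f [] \<rho> = Leaf (f \<rho>)"
| "bt f (i # is) \<rho> = Query i (bt f is (\<rho>(i := False))) (bt f is (\<rho>(i := True)))"

lemma bt_eval: "dt_eval (bt f is \<rho>) x = f (\<lambda>j. if j \<in> set is then x j else \<rho> j)"
proof (induction "is" arbitrary: \<rho>)
  case Nil then show ?case by simp
next
  case (Cons i "is")
  show ?case
  proof (cases "x i")
    case True
    have "(\<lambda>j. if j \<in> set is then x j else (\<rho>(i := True)) j) = (\<lambda>j. if j \<in> set (i # is) then x j else \<rho> j)"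
      using True by (auto simp: fun_eq_iff)
    then show ?thesis using True Cons by simp
  next
    case False
    have "(\<lambda>j. if j \<in> set is then x j else (\<rho>(i := False)) j) = (\<lambda>j. if j \<in> set (i # is) then x j else \<rho> j)"
      using False by (auto simp: fun_eq_iff)
    then show ?thesis using False Cons by simp
  qed
qed

lemma bt_vars: "dt_vars (bt f is \<rho>) \<subseteq> set is"
  by (induction "is" arbitrary: \<rho>) auto

lemma exists_tree: "\<exists>t. dt_vars t \<subseteq> {..<n} \<and> (\<forall>x\<in>cube n. dt_eval t x = f x)"
proof (intro exI conjI ballI)
  have "dt_vars (bt f [0..<n] (\<lambda>_. False)) \<subseteq> {0..<n}" using bt_vars[of f "[0..<n]" "\<lambda>_. False"] by simp
  then show "dt_vars (bt f [0..<n] (\<lambda>_. False)) \<subseteq> {..<n}" by auto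
  fix x assume x: "x \<in> cube n"
  have "(\<lambda>j. if j \<in> set [0..<n] then x j else False) = x"
    using x by (auto simp: fun_eq_iff cube_iff)
  then show "dt_eval (bt f [0..<n] (\<lambda>_. False)) x = f x" by (simp add: bt_eval)
qed

context iprr_ctx
begin

lemma expected_cost:
  "expect n (iprr_cost n f eps c beta sel) \<le> beta * real n + opt_avg0 n f c * (20 * ln (1 / eps))"
proof -
  define K where "K = 20 * ln (1 / eps)"
  have K0: "0 < K" unfolding K_def using eps0 eps1 by simp
  define E where "E = expect n (iprr_cost n f eps c beta sel)"
  define SS where "SS = {expect n (\<lambda>x. \<Sum>i\<in>dt_queried t x. c i) | t.
       dt_vars t \<subseteq> {..<n} \<and> (\<forall>x\<in>cube n. dt_eval t x = f x)}"
  have ne: "SS \<noteq> {}" unfolding SS_def using exists_tree[of n f] by blast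
  have lb: "(E - beta * real n) / K \<le> s" if "s \<in> SS" for s
  proof -
    obtain t where t: "s = expect n (\<lambda>x. \<Sum>i\<in>dt_queried t x. c i)" "dt_vars t \<subseteq> {..<n}"
        "\<forall>x\<in>cube n. dt_eval t x = f x"
      using \<open>s \<in> SS\<close> unfolding SS_def by blast
    have pt: "iprr_cost n f eps c beta sel x \<le> beta * real n + K * (\<Sum>i\<in>dt_queried t x. c i)"
      if x: "x \<in> cube n" for x
    proof -
      have Q: "dt_queried t x \<subseteq> {..<n}" using dt_queried_sub t(2) by blast
      have cert: "\<forall>y\<in>cube n. (\<forall>i\<in>dt_queried t x. y i = x i) \<longrightarrow> f y = f x"
        using t(3) x dt_cert by metis
      show ?thesis unfolding cost_eq K_def by (rule cost_bound[OF x Q cert])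
    qed
    have "(\<Sum>x\<in>cube n. iprr_cost n f eps c beta sel x)
        \<le> (\<Sum>x\<in>cube n. beta * real n + K * (\<Sum>i\<in>dt_queried t x. c i))"
      by (rule sum_mono) (rule pt)
    also have "\<dots> = 2 ^ n * (beta * real n) + K * (\<Sum>x\<in>cube n. \<Sum>i\<in>dt_queried t x. c i)"
      by (simp add: sum.distrib sum_distrib_left card_cube)
    finally have "E \<le> (2 ^ n * (beta * real n) + K * (\<Sum>x\<in>cube n. \<Sum>i\<in>dt_queried t x. c i)) / 2 ^ n"
      unfolding E_def expect_def by (intro divide_right_mono) simp_all
    also have "\<dots> = beta * real n + K * s"
      unfolding t(1) expect_def by (simp add: field_simps)
    finally have "E - beta * real n \<le> K * s" by simp
    then show ?thesis using K0 by (simp add: field_simps)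
  qed
  have "(E - beta * real n) / K \<le> Inf SS" by (rule cInf_greatest[OF ne lb])
  then have "(E - beta * real n) / K \<le> opt_avg0 n f c" unfolding opt_avg0_def SS_def .
  then have "E - beta * real n \<le> opt_avg0 n f c * K" using K0 by (simp add: field_simps)
  then show ?thesis unfolding E_def K_def by simp
qed

lemma all_props:
  "(\<forall>x\<in>cube n. iprr_halts n f eps c beta sel x) \<and>
   prob n (\<lambda>x. iprr_output n f eps c beta sel x \<noteq> f x) \<le> eps \<and>
   expect n (iprr_cost n f eps c beta sel) \<le> beta * real n + opt_avg0 n f c * (20 * ln (1 / eps))"
  using halts error_bound expected_cost unfolding iprr_halts_def by blast

end

theorem mainTheorem6:
  "\<exists>C>0. \<forall>(n::nat) (f::(nat \<Rightarrow> bool) \<Rightarrow> bool) (c::nat \<Rightarrow> real) (\<epsilon>::real) (\<beta>::real) sel.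
     symmetric_fun n f \<and> (\<forall>i<n. 0 \<le> c i) \<and> 0 < \<epsilon> \<and> \<epsilon> \<le> 1/2 \<and> 0 < \<beta> \<and>
     valid_selection n f \<epsilon> sel \<longrightarrow>
       (\<forall>x\<in>cube n. iprr_halts n f \<epsilon> c \<beta> sel x) \<and>
       prob n (\<lambda>x. iprr_output n f \<epsilon> c \<beta> sel x \<noteq> f x) \<le> \<epsilon> \<and>
       expect n (iprr_cost n f \<epsilon> c \<beta> sel)
         \<le> \<beta> * real n + opt_avg0 n f c * (C * ln (1 / \<epsilon>))"
proof (rule exI[of _ "20::real"], intro conjI allI impI)
  show "(0::real) < 20" by simp
  fix n :: nat and f :: "(nat \<Rightarrow> bool) \<Rightarrow> bool" and c :: "nat \<Rightarrow> real"
    and \<epsilon> \<beta> :: real and sel :: "(nat \<Rightarrow> real) \<Rightarrow> (nat \<rightharpoonup> bool) \<Rightarrow> nat"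
  assume H: "symmetric_fun n f \<and> (\<forall>i<n. 0 \<le> c i) \<and> 0 < \<epsilon> \<and> \<epsilon> \<le> 1/2 \<and> 0 < \<beta> \<and>
     valid_selection n f \<epsilon> sel"
  interpret iprr_ctx n f c \<epsilon> \<beta> sel
    using H by unfold_locales auto
  show "\<forall>x\<in>cube n. iprr_halts n f \<epsilon> c \<beta> sel x" using all_props by blast
  show "prob n (\<lambda>x. iprr_output n f \<epsilon> c \<beta> sel x \<noteq> f x) \<le> \<epsilon>" using all_props by blast
  show "expect n (iprr_cost n f \<epsilon> c \<beta> sel) \<le> \<beta> * real n + opt_avg0 n f c * (20 * ln (1 / \<epsilon>))"
    using all_props by blast
qed


end
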